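(* For all integers $M,N,p\ge1$, $$\delta_p(M,N)=\frac{1}{(MN)^p}\sum_{\substack{\pi,\sigma\in P(p)\\ \pi\triangleright\sigma}}\frac{M!}{(M-|\pi|)!}\cdot\frac{N!}{(N-|\sigma|)!},$$ where $\frac{M!}{(M-s)!}$ is interpreted as $0$ when $s>M$ (and similarly for $N$).
   Context: $P(p)$ is the set of partitions of $\{1,\dots,p\}$, and $|\pi|$ is the number of blocks of $\pi$. For $\pi,\sigma\in P(p)$, write $\pi\triangleright\sigma$ if for every block $\beta$ of $\pi$ and every block $\gamma$ of $\sigma$, $\#\{x\in\{1,\dots,p\}:x\in\beta,\ x\in\gamma\}=\#\{x\in\{1,\dots,p\}:x\in\beta,\ x+1\in\gamma\}$, indices taken modulo $p$ (so $p+1=1$). For integers $M,N,p\ge1$, $\delta_p(M,N)=\frac{1}{(MN)^p}\#\{(a,b)\in\mathbb Z_M^p\times\mathbb Z_N^p:\{(a_y,b_y)\}_{y=1}^p=\{(a_y,b_{y+1})\}_{y=1}^p\text{ as multisets}\}$, with $b_{p+1}=b_1$. *)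

theory Defs
  imports Complex_Main "HOL-Library.Disjoint_Sets" "HOL-Library.Multiset" "HOL-Library.FuncSet"
begin

definition set_partitions :: "nat \<Rightarrow> nat set set set" where
  "set_partitions p = {P. partition_on {1..p} P}"

definition cyc_succ :: "nat \<Rightarrow> nat \<Rightarrow> nat" where
  "cyc_succ p x = (if x = p then 1 else x + 1)"

definition rel_tri :: "nat \<Rightarrow> nat set set \<Rightarrow> nat set set \<Rightarrow> bool" where
  "rel_tri p \<pi> \<sigma> \<longleftrightarrow> (\<forall>\<beta>\<in>\<pi>. \<forall>\<gamma>\<in>\<sigma>.
     card {x\<in>{1..p}. x \<in> \<beta> \<and> x \<in> \<gamma>} = card {x\<in>{1..p}. x \<in> \<beta> \<and> cyc_succ p x \<in> \<gamma>})"

text \<open>Pairs (a,b) in Z_M^p x Z_N^p, coordinates indexed by {1..p}, Z_M represented by {0..<M}.\<close>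
definition delta :: "nat \<Rightarrow> nat \<Rightarrow> nat \<Rightarrow> real" where
  "delta p M N = real (card {(a, b). a \<in> ({1..p} \<rightarrow>\<^sub>E {..<M}) \<and> b \<in> ({1..p} \<rightarrow>\<^sub>E {..<N}) \<and>
      image_mset (\<lambda>y. (a y, b y)) (mset_set {1..p}) =
      image_mset (\<lambda>y. (a y, b (cyc_succ p y))) (mset_set {1..p})})
    / (real (M * N)) ^ p"

definition falling :: "nat \<Rightarrow> nat \<Rightarrow> real" where
  "falling M s = (if s \<le> M then fact M / fact (M - s) else 0)"

end

theory Submission
  imports Defs
begin

lemma falling_prod:
  "real (\<Prod>i\<in>{0..<s}. (M::nat) - i) = falling M s"
proof (induction s)
  case 0 then show ?case by (simp add: falling_def)
next
  case (Suc s)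
  show ?case
  proof (cases "Suc s \<le> M")
    case True
    have f: "fact (M - s) = real (M - s) * fact (M - Suc s)"
      using True by (metis Suc_diff_Suc Suc_le_lessD fact_Suc of_nat_Suc)
    have ms: "real (M - s) > 0" using True by simp
    have "real (\<Prod>i\<in>{0..<Suc s}. M - i) = real (\<Prod>i\<in>{0..<s}. M - i) * real (M - s)"
      by simp
    also have "\<dots> = fact M / fact (M - s) * real (M - s)"
      using Suc True by (simp add: falling_def)
    also have "\<dots> = fact M / fact (M - Suc s)"
      unfolding f using ms by simp
    finally show ?thesis using True by (simp add: falling_def)
  next
    case False
    then have "M \<in> {0..<Suc s}" by auto
    then have "(\<Prod>i\<in>{0..<Suc s}. M - i) = 0"
      by (metis (no_types, lifting) diff_self_eq_0 finite_atLeastLessThan prod_zero_iff)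
    then show ?thesis using False by (simp add: falling_def)
  qed
qed

definition kern :: "nat \<Rightarrow> (nat \<Rightarrow> nat) \<Rightarrow> nat set set" where
  "kern p a = (\<lambda>u. {x\<in>{1..p}. a x = u}) ` (a ` {1..p})"

lemma kern_part: "kern p a \<in> set_partitions p"
  unfolding set_partitions_def partition_on_def kern_def disjoint_def
  by auto

lemma finite_parts: "finite (set_partitions p)"
proof -
  have "set_partitions p \<subseteq> Pow (Pow {1..p})"
    unfolding set_partitions_def using partition_onD1 by fastforce
  then show ?thesis by (rule finite_subset) auto
qed

definition blk :: "nat set set \<Rightarrow> nat \<Rightarrow> nat set" where
  "blk P x = (THE \<beta>. \<beta> \<in> P \<and> x \<in> \<beta>)"

lemma blk_props:
  assumes "partition_on A P" "x \<in> A"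
  shows "blk P x \<in> P" "x \<in> blk P x"
    "\<And>\<beta>. \<beta> \<in> P \<Longrightarrow> x \<in> \<beta> \<Longrightarrow> blk P x = \<beta>"
proof -
  have ex: "\<exists>!\<beta>. \<beta> \<in> P \<and> x \<in> \<beta>"
  proof -
    have "x \<in> \<Union>P" using partition_onD1[OF assms(1)] assms(2) by simp
    then obtain \<beta> where b: "\<beta> \<in> P" "x \<in> \<beta>" by (rule UnionE)
    moreover have "\<gamma> = \<beta>" if g: "\<gamma> \<in> P" "x \<in> \<gamma>" for \<gamma>
    proof (rule ccontr)
      assume "\<gamma> \<noteq> \<beta>"
      then have "\<gamma> \<inter> \<beta> = {}" using disjointD[OF partition_onD2[OF assms(1)] g(1) b(1)] by simp
      then show False using g(2) b(2) by blast
    qed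
    ultimately show ?thesis by blast
  qed
  have c: "blk P x \<in> P \<and> x \<in> blk P x" unfolding blk_def by (rule theI'[OF ex])
  then show "blk P x \<in> P" "x \<in> blk P x" by simp_all
  show "blk P x = \<beta>" if "\<beta> \<in> P" "x \<in> \<beta>" for \<beta>
    unfolding blk_def by (rule the1_equality[OF ex]) (simp add: that)
qed

lemma kern_some:
  assumes "kern p a = \<pi>" "\<beta> \<in> \<pi>" "x \<in> \<beta>"
  shows "a (SOME y. y \<in> \<beta>) = a x" "(SOME y. y \<in> \<beta>) \<in> \<beta>" "\<beta> \<subseteq> {1..p}"
proof -
  obtain u where u: "\<beta> = {x\<in>{1..p}. a x = u}" using assms unfolding kern_def by auto
  show "(SOME y. y \<in> \<beta>) \<in> \<beta>" using assms(3) by (rule someI)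
  then show "a (SOME y. y \<in> \<beta>) = a x" using u assms(3) by auto
  show "\<beta> \<subseteq> {1..p}" using u by auto
qed

lemma card_kern:
  assumes \<pi>: "\<pi> \<in> set_partitions p"
  shows "card {a \<in> {1..p} \<rightarrow>\<^sub>E {..<M}. kern p a = \<pi>} = card {f \<in> \<pi> \<rightarrow>\<^sub>E {..<M}. inj_on f \<pi>}"
proof -
  let ?A = "{1..p}"
  have P: "partition_on ?A \<pi>" using \<pi> unfolding set_partitions_def by simp
  define g where "g f = (\<lambda>x\<in>?A. f (blk \<pi> x))" for f :: "nat set \<Rightarrow> nat"
  define h where "h a = (\<lambda>\<beta>\<in>\<pi>. a (SOME y. y \<in> \<beta>))" for a :: "nat \<Rightarrow> nat"
  have ne: "\<And>\<beta>. \<beta> \<in> \<pi> \<Longrightarrow> \<exists>x. x \<in> \<beta>" using partition_onD3[OF P] by (metis all_not_in_conv)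
  have sub: "\<And>\<beta>. \<beta> \<in> \<pi> \<Longrightarrow> \<beta> \<subseteq> ?A" using partition_onD1[OF P] by blast
  show ?thesis
  proof (rule sym, rule bij_betw_same_card, rule bij_betwI[where g = h])
    show "g \<in> {f \<in> \<pi> \<rightarrow>\<^sub>E {..<M}. inj_on f \<pi>} \<rightarrow> {a \<in> ?A \<rightarrow>\<^sub>E {..<M}. kern p a = \<pi>}"
    proof
      fix f assume f: "f \<in> {f \<in> \<pi> \<rightarrow>\<^sub>E {..<M}. inj_on f \<pi>}"
      have "g f \<in> ?A \<rightarrow>\<^sub>E {..<M}" using f blk_props(1)[OF P] unfolding g_def by auto
      moreover have "kern p (g f) = \<pi>"
      proof
        show "kern p (g f) \<subseteq> \<pi>"
        proof
          fix \<beta> assume "\<beta> \<in> kern p (g f)"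
          then obtain x0 where x0: "x0 \<in> ?A" "\<beta> = {x\<in>?A. g f x = g f x0}" unfolding kern_def by auto
          have "\<beta> = blk \<pi> x0"
          proof (rule set_eqI, rule iffI)
            fix x assume "x \<in> \<beta>"
            then have x: "x \<in> ?A" "f (blk \<pi> x) = f (blk \<pi> x0)" using x0 unfolding g_def by auto
            then have "blk \<pi> x = blk \<pi> x0" using f blk_props(1)[OF P] x0(1) by (auto dest: inj_onD)
            then show "x \<in> blk \<pi> x0" using blk_props(2)[OF P x(1)] by simp
          next
            fix x assume x: "x \<in> blk \<pi> x0"
            then have xA: "x \<in> ?A" using sub blk_props(1)[OF P x0(1)] by blast
            have "blk \<pi> x = blk \<pi> x0" using blk_props(3)[OF P xA blk_props(1)[OF P x0(1)] x] .
            then show "x \<in> \<beta>" using x0 xA unfolding g_def by auto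
          qed
          then show "\<beta> \<in> \<pi>" using blk_props(1)[OF P x0(1)] by simp
        qed
      next
        show "\<pi> \<subseteq> kern p (g f)"
        proof
          fix \<beta> assume b: "\<beta> \<in> \<pi>"
          then obtain x0 where x0: "x0 \<in> \<beta>" using ne by blast
          have x0A: "x0 \<in> ?A" using sub b x0 by blast
          have bb: "blk \<pi> x0 = \<beta>" using blk_props(3)[OF P x0A b x0] .
          have "\<beta> = {x\<in>?A. g f x = g f x0}"
          proof (rule set_eqI, rule iffI)
            fix x assume x: "x \<in> \<beta>"
            then have xA: "x \<in> ?A" using sub b by blast
            have "blk \<pi> x = \<beta>" using blk_props(3)[OF P xA b x] .
            then show "x \<in> {x\<in>?A. g f x = g f x0}" using xA x0A bb unfolding g_def by auto
          next
            fix x assume "x \<in> {x\<in>?A. g f x = g f x0}"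
            then have x: "x \<in> ?A" "f (blk \<pi> x) = f (blk \<pi> x0)" using x0A unfolding g_def by auto
            then have "blk \<pi> x = blk \<pi> x0" using f blk_props(1)[OF P] x0A by (auto dest: inj_onD)
            then show "x \<in> \<beta>" using blk_props(2)[OF P x(1)] bb by simp
          qed
          then show "\<beta> \<in> kern p (g f)" unfolding kern_def using x0A by blast
        qed
      qed
      ultimately show "g f \<in> {a \<in> ?A \<rightarrow>\<^sub>E {..<M}. kern p a = \<pi>}" by simp
    qed
  next
    show "h \<in> {a \<in> ?A \<rightarrow>\<^sub>E {..<M}. kern p a = \<pi>} \<rightarrow> {f \<in> \<pi> \<rightarrow>\<^sub>E {..<M}. inj_on f \<pi>}"
    proof
      fix a assume a: "a \<in> {a \<in> ?A \<rightarrow>\<^sub>E {..<M}. kern p a = \<pi>}"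
      have "h a \<in> \<pi> \<rightarrow>\<^sub>E {..<M}"
      proof -
        have "\<And>\<beta>. \<beta> \<in> \<pi> \<Longrightarrow> a (SOME y. y \<in> \<beta>) \<in> {..<M}"
        proof -
          fix \<beta> assume b: "\<beta> \<in> \<pi>"
          then obtain x where "x \<in> \<beta>" using ne by blast
          then have "(SOME y. y \<in> \<beta>) \<in> ?A" using kern_some(2,3)[of p a \<pi> \<beta> x] a b by auto
          then show "a (SOME y. y \<in> \<beta>) \<in> {..<M}" using a by auto
        qed
        then show ?thesis unfolding h_def by auto
      qed
      moreover have "inj_on (h a) \<pi>"
      proof
        fix \<beta>1 \<beta>2 assume b: "\<beta>1 \<in> \<pi>" "\<beta>2 \<in> \<pi>" "h a \<beta>1 = h a \<beta>2"
        obtain u1 where u1: "\<beta>1 = {x\<in>?A. a x = u1}" using a b(1) unfolding kern_def by auto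
        obtain u2 where u2: "\<beta>2 = {x\<in>?A. a x = u2}" using a b(2) unfolding kern_def by auto
        obtain x1 where x1: "x1 \<in> \<beta>1" using ne b by blast
        obtain x2 where x2: "x2 \<in> \<beta>2" using ne b by blast
        have "a x1 = a x2" using b kern_some(1)[of p a \<pi> \<beta>1 x1] kern_some(1)[of p a \<pi> \<beta>2 x2] a x1 x2
          unfolding h_def by auto
        then have "u1 = u2" using u1 u2 x1 x2 by auto
        then show "\<beta>1 = \<beta>2" using u1 u2 by simp
      qed
      ultimately show "h a \<in> {f \<in> \<pi> \<rightarrow>\<^sub>E {..<M}. inj_on f \<pi>}" by simp
    qed
  next
    fix f assume f: "f \<in> {f \<in> \<pi> \<rightarrow>\<^sub>E {..<M}. inj_on f \<pi>}"
    show "h (g f) = f"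
    proof (rule ext)
      fix \<beta>
      show "h (g f) \<beta> = f \<beta>"
      proof (cases "\<beta> \<in> \<pi>")
        case True
        then obtain x where x: "x \<in> \<beta>" using ne by blast
        then have s: "(SOME y. y \<in> \<beta>) \<in> \<beta>" by (rule someI)
        then have sA: "(SOME y. y \<in> \<beta>) \<in> ?A" using sub True by blast
        have "blk \<pi> (SOME y. y \<in> \<beta>) = \<beta>" using blk_props(3)[OF P sA True s] .
        then show ?thesis using True sA unfolding h_def g_def by simp
      next
        case False
        then show ?thesis using f unfolding h_def by auto
      qed
    qed
  next
    fix a assume a: "a \<in> {a \<in> ?A \<rightarrow>\<^sub>E {..<M}. kern p a = \<pi>}"
    show "g (h a) = a"
    proof (rule ext)
      fix x
      show "g (h a) x = a x"
      proof (cases "x \<in> ?A")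
        case True
        define B where "B = blk \<pi> x"
        have B: "B \<in> \<pi>" "x \<in> B" using blk_props(1,2)[OF P True] unfolding B_def by auto
        have ka: "kern p a = \<pi>" using a by blast
        have "g (h a) x = h a B" unfolding g_def B_def by (rule restrict_apply'[OF True])
        also have "\<dots> = a (SOME y. y \<in> B)" by (simp add: h_def B(1))
        also have "\<dots> = a x" by (rule kern_some(1)[OF ka B])
        finally show ?thesis .
      next
        case False
        have aP: "a \<in> ?A \<rightarrow>\<^sub>E {..<M}" using a by blast
        have "a x = undefined" using PiE_arb[OF aP False] .
        moreover have "g (h a) x = undefined" unfolding g_def restrict_def by (simp only: if_not_P[OF False])
        ultimately show ?thesis by simp
      qed
    qed
  qed
qed

lemma count_img: "finite A \<Longrightarrow> count (image_mset h (mset_set A)) z = card {y\<in>A. h y = z}"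
proof -
  assume fin: "finite A"
  have "count (image_mset h (mset_set A)) z = (\<Sum>y\<in>h -` {z} \<inter> A. 1)"
    using fin by (simp add: count_image_mset)
  also have "\<dots> = card (h -` {z} \<inter> A)" by simp
  also have "h -` {z} \<inter> A = {y\<in>A. h y = z}" by auto
  finally show ?thesis .
qed

lemma cyc_in: "y \<in> {1..p} \<Longrightarrow> cyc_succ p y \<in> {1..p}"
  unfolding cyc_succ_def by auto

lemma cond_iff:
  fixes a b :: "nat \<Rightarrow> nat"
  shows "(image_mset (\<lambda>y. (a y, b y)) (mset_set {1..p}) =
      image_mset (\<lambda>y. (a y, b (cyc_succ p y))) (mset_set {1..p})) \<longleftrightarrow> rel_tri p (kern p a) (kern p b)"
proof -
  let ?A = "{1..p}"
  define Q where "Q u v \<longleftrightarrow> card {y\<in>?A. (a y, b y) = (u,v)} = card {y\<in>?A. (a y, b (cyc_succ p y)) = (u,v)}" for u v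
  have "(image_mset (\<lambda>y. (a y, b y)) (mset_set ?A) =
      image_mset (\<lambda>y. (a y, b (cyc_succ p y))) (mset_set ?A)) \<longleftrightarrow> (\<forall>u v. Q u v)"
    unfolding multiset_eq_iff count_img[OF finite_atLeastAtMost] Q_def by auto
  also have "\<dots> \<longleftrightarrow> (\<forall>u\<in>a ` ?A. \<forall>v\<in>b ` ?A. Q u v)"
  proof
    assume "\<forall>u\<in>a ` ?A. \<forall>v\<in>b ` ?A. Q u v"
    moreover have "Q u v" if "u \<notin> a ` ?A \<or> v \<notin> b ` ?A" for u v
    proof -
      have e1: "{y\<in>?A. (a y, b y) = (u,v)} = {}" using that by auto
      have e2: "{y\<in>?A. (a y, b (cyc_succ p y)) = (u,v)} = {}" using that cyc_in[of _ p] by force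
      show ?thesis by (simp only: Q_def e1 e2)
    qed
    ultimately show "\<forall>u v. Q u v" by blast
  qed auto
  also have "\<dots> \<longleftrightarrow> rel_tri p (kern p a) (kern p b)"
  proof -
    have e1: "{x\<in>?A. x \<in> {x\<in>?A. a x = u} \<and> x \<in> {x\<in>?A. b x = v}} = {y\<in>?A. (a y, b y) = (u,v)}" for u v
      by auto
    have e2: "{x\<in>?A. x \<in> {x\<in>?A. a x = u} \<and> cyc_succ p x \<in> {x\<in>?A. b x = v}} = {y\<in>?A. (a y, b (cyc_succ p y)) = (u,v)}" for u v
      using cyc_in[of _ p] by auto
    show ?thesis unfolding rel_tri_def kern_def Q_def using e1 e2 by simp
  qed
  finally show ?thesis .
qed

lemma card_K:
  assumes "\<pi> \<in> set_partitions p"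
  shows "real (card {a \<in> {1..p} \<rightarrow>\<^sub>E {..<M}. kern p a = \<pi>}) = falling M (card \<pi>)"
proof -
  have fin: "finite \<pi>" using assms finite_elements[of "{1..p}" \<pi>] unfolding set_partitions_def by simp
  have "card {a \<in> {1..p} \<rightarrow>\<^sub>E {..<M}. kern p a = \<pi>} = card {f \<in> \<pi> \<rightarrow>\<^sub>E {..<M}. inj_on f \<pi>}"
    using card_kern[OF assms] .
  also have "\<dots> = (\<Prod>i\<in>{0..<card \<pi>}. M - i)"
    using card_inj_on_subset_funcset[OF fin, of "{..<M}" \<pi>] by simp
  finally show ?thesis using falling_prod by simp
qed

theorem proposition7p1:
  fixes M N p :: nat
  assumes "M \<ge> 1" and "N \<ge> 1" and "p \<ge> 1"
  shows "delta p M N = 1 / (real (M * N)) ^ p *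
    (\<Sum>(\<pi>, \<sigma>) \<in> {(\<pi>, \<sigma>). \<pi> \<in> set_partitions p \<and> \<sigma> \<in> set_partitions p \<and> rel_tri p \<pi> \<sigma>}.
       falling M (card \<pi>) * falling N (card \<sigma>))"
proof -
  let ?A = "{1..p}"
  let ?FA = "?A \<rightarrow>\<^sub>E {..<M}"
  let ?FB = "?A \<rightarrow>\<^sub>E {..<N}"
  define S where "S = {(a, b). a \<in> ?FA \<and> b \<in> ?FB \<and>
      image_mset (\<lambda>y. (a y, b y)) (mset_set ?A) =
      image_mset (\<lambda>y. (a y, b (cyc_succ p y))) (mset_set ?A)}"
  define T where "T = {(\<pi>, \<sigma>). \<pi> \<in> set_partitions p \<and> \<sigma> \<in> set_partitions p \<and> rel_tri p \<pi> \<sigma>}"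
  define K where "K C \<pi> = {a \<in> ?A \<rightarrow>\<^sub>E {..<C}. kern p a = \<pi>}" for C :: nat and \<pi>
  let ?g = "\<lambda>(a, b). (kern p a, kern p b)"
  have S': "S = {(a, b). a \<in> ?FA \<and> b \<in> ?FB \<and> rel_tri p (kern p a) (kern p b)}"
    unfolding S_def cond_iff ..
  have finS: "finite S"
  proof -
    have "S \<subseteq> ?FA \<times> ?FB" unfolding S_def by auto
    moreover have "finite (?FA \<times> ?FB)" by (simp add: finite_PiE)
    ultimately show ?thesis by (rule finite_subset)
  qed
  have finT: "finite T"
  proof -
    have "T \<subseteq> set_partitions p \<times> set_partitions p" unfolding T_def by auto
    then show ?thesis using finite_parts by (metis finite_SigmaI finite_subset)
  qed
  have gST: "?g ` S \<subseteq> T" unfolding S' T_def using kern_part by auto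
  have fib: "{x \<in> S. ?g x = y} = K M (fst y) \<times> K N (snd y)" if "y \<in> T" for y
    using that unfolding S' T_def K_def by auto
  have "card S = (\<Sum>x\<in>S. 1)" by simp
  also have "\<dots> = (\<Sum>y\<in>T. \<Sum>x\<in>{x \<in> S. ?g x = y}. 1)"
    by (rule sum.group[OF finS finT gST, symmetric])
  also have "\<dots> = (\<Sum>y\<in>T. card (K M (fst y)) * card (K N (snd y)))"
    by (rule sum.cong) (simp_all add: fib card_cartesian_product)
  finally have "real (card S) = (\<Sum>y\<in>T. real (card (K M (fst y))) * real (card (K N (snd y))))"
    by simp
  also have "\<dots> = (\<Sum>(\<pi>, \<sigma>)\<in>T. falling M (card \<pi>) * falling N (card \<sigma>))"
  proof (rule sum.cong[OF refl])
    fix y assume "y \<in> T"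
    then obtain \<pi> \<sigma> where y: "y = (\<pi>, \<sigma>)" "\<pi> \<in> set_partitions p" "\<sigma> \<in> set_partitions p"
      unfolding T_def by auto
    have "real (card (K M \<pi>)) = falling M (card \<pi>)" unfolding K_def by (rule card_K[OF y(2)])
    moreover have "real (card (K N \<sigma>)) = falling N (card \<sigma>)" unfolding K_def by (rule card_K[OF y(3)])
    ultimately show "real (card (K M (fst y))) * real (card (K N (snd y))) =
        (case y of (\<pi>, \<sigma>) \<Rightarrow> falling M (card \<pi>) * falling N (card \<sigma>))" using y(1) by simp
  qed
  finally have cS: "real (card S) = (\<Sum>(\<pi>, \<sigma>)\<in>T. falling M (card \<pi>) * falling N (card \<sigma>))" .
  have "delta p M N = real (card S) / (real (M * N)) ^ p"
    unfolding delta_def S_def by simp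
  then show ?thesis unfolding cS T_def by simp
qed

end
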